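(* Let $V$ be a finite nonempty set, $U\subseteq V$, $\hat x$ a maximally specific partial function on $P_V$, $\hat x'=\hat x|_{P_U}$, $y\in X_U[\hat x']$, and $\tau\in\{\tau^y_{\mathrm{out}},\tau^y_{\mathrm{in}},\tau^y_{\mathrm{bd}}\}$, with the corresponding sets $P'_{01},P''_{01},P'_{10},P''_{10}$ given in the context. If $P'_{10}\cap\hat x^{-1}(1)=P'_{01}\cap\hat x^{-1}(0)=\emptyset$, or if $P''_{10}\cap\hat x^{-1}(1)=P''_{01}\cap\hat x^{-1}(0)=\emptyset$, then $\tau(X_V[\hat x])\subseteq X_V[\hat x]$.
   Context: For a finite set $W$, $P_W=\{pq\in W^2\mid p\neq q\}$ and $X_W$ is the set of $x\in\{0,1\}^{P_W}$ with $x_{pq}+x_{qr}-x_{pr}\le1$ for all pairwise distinct $p,q,r\in W$. A partial function $\tilde x$ on $P_W$ is a map from $\operatorname{dom}(\tilde x)\subseteq P_W$ to $\{0,1\}$, $\tilde x^{-1}(b)$ the pairs mapped to $b$, $X_W[\tilde x]=\{x\in X_W\mid x_{pq}=\tilde x_{pq}\ \forall pq\in\operatorname{dom}(\tilde x)\}$; convention $\tilde x_{aa}=1$, $x_{aa}=1$, $y_{aa}=1$ for all $a$. A pair is decided if it has the same value in all completions; $\tilde x$ is maximally specific if $X_W[\tilde x]\ne\emptyset$ and the decided pairs are exactly $\operatorname{dom}(\tilde x)$. $\hat x|_{P_U}$ has domain $\operatorname{dom}(\hat x)\cap P_U$. $\delta(U)=(U\times(V\setminus U))\cup((V\setminus U)\times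 U)$. For $x\in X_V[\hat x]$: $\tau^y_{\mathrm{out}}(x)_{pq}$ equals $y_{pq}$ on $P_U$; $0$ on $U\times(V\setminus U)$; on $(V\setminus U)\times U$, $1$ if $\exists r\in U: x_{pr}=1\wedge y_{rq}=1$ and $0$ otherwise; $x_{pq}$ on $P_{V\setminus U}$. $\tau^y_{\mathrm{in}}(x)_{pq}$ equals $y_{pq}$ on $P_U$; $0$ on $(V\setminus U)\times U$; on $U\times(V\setminus U)$, $1$ if $\exists r\in U: y_{pr}=1\wedge x_{rq}=1$ and $0$ otherwise; $x_{pq}$ on $P_{V\setminus U}$. $\tau^y_{\mathrm{bd}}(x)_{pq}$ equals $y_{pq}$ on $P_U$; $0$ on $\delta(U)$; $x_{pq}$ on $P_{V\setminus U}$. Sets: for $\tau^y_{\mathrm{out}}$: $P'_{01}=\{pq\in(V\setminus U)\times U\mid\exists r\in U:\hat x_{pr}\ne0\wedge y_{rq}=1\}\setminus\hat x^{-1}(1)$, $P''_{01}=((V\setminus U)\times U)\setminus\hat x^{-1}(1)$, $P'_{10}=P''_{10}=(U\times(V\setminus U))\setminus\hat x^{-1}(0)$. For $\tau^y_{\mathrm{in}}$: $P'_{01}=\{pq\in U\times(V\setminus U)\mid\exists r\in U: y_{pr}=1\wedge\hat x_{rq}\ne0\}\setminus\hat x^{-1}(1)$, $P''_{01}=(U\times(V\setminus U))\setminus\hat x^{-1}(1)$, $P'_{10}=P''_{10}=((V\setminus U)\times U)\setminus\hat x^{-1}(0)$. For $\tau^y_{\mathrm{bd}}$: $P'_{01}=P''_{01}=\emptyset$,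 $P'_{10}=P''_{10}=\delta(U)\setminus\hat x^{-1}(0)$. *)

theory Defs
  imports Main
begin

text \<open>The convention x_aa = 1 is implemented by the evaluation function val.\<close>

definition P :: "'a set \<Rightarrow> ('a \<times> 'a) set" where
  "P W = {(p, q). p \<in> W \<and> q \<in> W \<and> p \<noteq> q}"

definition X :: "'a set \<Rightarrow> (('a \<times> 'a) \<Rightarrow> int) set" where
  "X W = {x. (\<forall>pq \<in> P W. x pq \<in> {0, 1}) \<and> (\<forall>pq. pq \<notin> P W \<longrightarrow> x pq = 0) \<and>
     (\<forall>p\<in>W. \<forall>q\<in>W. \<forall>r\<in>W. p \<noteq> q \<and> q \<noteq> r \<and> p \<noteq> r \<longrightarrow>
        x (p, q) + x (q, r) - x (p, r) \<le> 1)}"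

definition val :: "(('a \<times> 'a) \<Rightarrow> int) \<Rightarrow> 'a \<Rightarrow> 'a \<Rightarrow> int" where
  "val x p q = (if p = q then 1 else x (p, q))"

definition partial_fun_on :: "'a set \<Rightarrow> (('a \<times> 'a) \<rightharpoonup> int) \<Rightarrow> bool" where
  "partial_fun_on W xh \<longleftrightarrow> dom xh \<subseteq> P W \<and> ran xh \<subseteq> {0, 1}"

definition preim :: "(('a \<times> 'a) \<rightharpoonup> int) \<Rightarrow> int \<Rightarrow> ('a \<times> 'a) set" where
  "preim xh b = {pq. xh pq = Some b}"

definition pval :: "(('a \<times> 'a) \<rightharpoonup> int) \<Rightarrow> 'a \<Rightarrow> 'a \<Rightarrow> int option" where
  "pval xh p q = (if p = q then Some 1 else xh (p, q))"

definition Xp :: "'a set \<Rightarrow> (('a \<times> 'a) \<rightharpoonup> int) \<Rightarrow> (('a \<times> 'a) \<Rightarrow> int) set" where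
  "Xp W xh = {x \<in> X W. \<forall>pq \<in> dom xh. xh pq = Some (x pq)}"

definition decided :: "'a set \<Rightarrow> (('a \<times> 'a) \<rightharpoonup> int) \<Rightarrow> ('a \<times> 'a) \<Rightarrow> bool" where
  "decided W xh pq \<longleftrightarrow> (\<exists>b. \<forall>x \<in> Xp W xh. x pq = b)"

definition maximally_specific :: "'a set \<Rightarrow> (('a \<times> 'a) \<rightharpoonup> int) \<Rightarrow> bool" where
  "maximally_specific W xh \<longleftrightarrow> partial_fun_on W xh \<and> Xp W xh \<noteq> {} \<and>
     {pq \<in> P W. decided W xh pq} = dom xh"

datatype tkind = Out | In | Bd

definition tau :: "tkind \<Rightarrow> 'a set \<Rightarrow> 'a set \<Rightarrow> (('a \<times> 'a) \<Rightarrow> int)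
    \<Rightarrow> (('a \<times> 'a) \<Rightarrow> int) \<Rightarrow> (('a \<times> 'a) \<Rightarrow> int)" where
  "tau k V U y x = (\<lambda>(p, q).
     if (p, q) \<in> P U then y (p, q)
     else if p \<in> U \<and> q \<in> V - U then
       (case k of
          In \<Rightarrow> (if \<exists>r \<in> U. val y p r = 1 \<and> val x r q = 1 then 1 else 0)
        | _ \<Rightarrow> 0)
     else if p \<in> V - U \<and> q \<in> U then
       (case k of
          Out \<Rightarrow> (if \<exists>r \<in> U. val x p r = 1 \<and> val y r q = 1 then 1 else 0)
        | _ \<Rightarrow> 0)
     else if (p, q) \<in> P (V - U) then x (p, q)
     else 0)"

definition P01' :: "tkind \<Rightarrow> 'a set \<Rightarrow> 'a set \<Rightarrow> (('a \<times> 'a) \<rightharpoonup> int)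
    \<Rightarrow> (('a \<times> 'a) \<Rightarrow> int) \<Rightarrow> ('a \<times> 'a) set" where
  "P01' k V U xh y = (case k of
     Out \<Rightarrow> {(p, q) \<in> (V - U) \<times> U. \<exists>r \<in> U. pval xh p r \<noteq> Some 0 \<and> val y r q = 1} - preim xh 1
   | In \<Rightarrow> {(p, q) \<in> U \<times> (V - U). \<exists>r \<in> U. val y p r = 1 \<and> pval xh r q \<noteq> Some 0} - preim xh 1
   | Bd \<Rightarrow> {})"

definition P01'' :: "tkind \<Rightarrow> 'a set \<Rightarrow> 'a set \<Rightarrow> (('a \<times> 'a) \<rightharpoonup> int) \<Rightarrow> ('a \<times> 'a) set" where
  "P01'' k V U xh = (case k of
     Out \<Rightarrow> ((V - U) \<times> U) - preim xh 1
   | In \<Rightarrow> (U \<times> (V - U)) - preim xh 1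
   | Bd \<Rightarrow> {})"

definition delta :: "'a set \<Rightarrow> 'a set \<Rightarrow> ('a \<times> 'a) set" where
  "delta V U = (U \<times> (V - U)) \<union> ((V - U) \<times> U)"

definition P10 :: "tkind \<Rightarrow> 'a set \<Rightarrow> 'a set \<Rightarrow> (('a \<times> 'a) \<rightharpoonup> int) \<Rightarrow> ('a \<times> 'a) set" where
  "P10 k V U xh = (case k of
     Out \<Rightarrow> (U \<times> (V - U)) - preim xh 0
   | In \<Rightarrow> ((V - U) \<times> U) - preim xh 0
   | Bd \<Rightarrow> delta V U - preim xh 0)"

text \<open>P'_10 = P''_10 in all three cases\<close>
abbreviation P10' where "P10' \<equiv> P10"
abbreviation P10'' where "P10'' \<equiv> P10"

end

theory Submission
  imports Defs
begin

lemma X_vals: "x \<in> X W \<Longrightarrow> pq \<in> P W \<Longrightarrow> x pq = 0 \<or> x pq = 1"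
  unfolding X_def by auto

lemma X_out: "x \<in> X W \<Longrightarrow> pq \<notin> P W \<Longrightarrow> x pq = 0"
  unfolding X_def by (cases pq) auto

lemma valtrans:
  assumes "x \<in> X W" "p \<in> W" "q \<in> W" "r \<in> W" "val x p q = 1" "val x q r = 1"
  shows "val x p r = 1"
proof (cases "p = r")
  case True then show ?thesis by (simp add: val_def)
next
  case False
  show ?thesis
  proof (cases "p = q \<or> q = r")
    case True then show ?thesis using assms by (auto simp: val_def)
  next
    case nq: False
    have "x (p,q) = 1" "x (q,r) = 1" using assms nq by (auto simp: val_def)
    moreover have "x (p,q) + x (q,r) - x (p,r) \<le> 1"
      using assms(1-4) nq False unfolding X_def by blast
    moreover have "x (p,r) = 0 \<or> x (p,r) = 1"
      using X_vals[OF assms(1)] assms False by (auto simp: P_def)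
    ultimately show ?thesis using False by (auto simp: val_def)
  qed
qed

lemma tau_UU: "p \<in> U \<Longrightarrow> q \<in> U \<Longrightarrow> p \<noteq> q \<Longrightarrow> tau k V U y x (p,q) = y (p,q)"
  by (simp add: tau_def P_def)
lemma tau_NN: "p \<in> V - U \<Longrightarrow> q \<in> V - U \<Longrightarrow> p \<noteq> q \<Longrightarrow> tau k V U y x (p,q) = x (p,q)"
  by (simp add: tau_def P_def)
lemma tau_UN: "p \<in> U \<Longrightarrow> q \<in> V - U \<Longrightarrow> tau k V U y x (p,q) =
   (case k of In \<Rightarrow> (if \<exists>r \<in> U. val y p r = 1 \<and> val x r q = 1 then 1 else 0) | _ \<Rightarrow> 0)"
  by (auto simp add: tau_def P_def)
lemma tau_NU: "p \<in> V - U \<Longrightarrow> q \<in> U \<Longrightarrow> tau k V U y x (p,q) =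
   (case k of Out \<Rightarrow> (if \<exists>r \<in> U. val x p r = 1 \<and> val y r q = 1 then 1 else 0) | _ \<Rightarrow> 0)"
  by (auto simp add: tau_def P_def)
lemma tau_outside: "U \<subseteq> V \<Longrightarrow> pq \<notin> P V \<Longrightarrow> tau k V U y x pq = 0"
  by (cases pq) (auto simp add: tau_def P_def)

theorem corollary7p4:
  fixes V U :: "'a set" and xh :: "('a \<times> 'a) \<rightharpoonup> int"
    and y :: "('a \<times> 'a) \<Rightarrow> int" and k :: tkind
  assumes "finite V" and "V \<noteq> {}" and "U \<subseteq> V"
    and "maximally_specific V xh"
    and "y \<in> Xp U (xh |` P U)"
    and "(P10' k V U xh \<inter> preim xh 1 = {} \<and> P01' k V U xh y \<inter> preim xh 0 = {})
         \<or> (P10'' k V U xh \<inter> preim xh 1 = {} \<and> P01'' k V U xh \<inter> preim xh 0 = {})"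
  shows "tau k V U y ` Xp V xh \<subseteq> Xp V xh"
proof
  fix t assume "t \<in> tau k V U y ` Xp V xh"
  then obtain x where xX: "x \<in> Xp V xh" and t: "t = tau k V U y x" by blast
  have xV: "x \<in> X V" and xa: "\<forall>pq \<in> dom xh. xh pq = Some (x pq)" using xX by (auto simp: Xp_def)
  have yU: "y \<in> X U" and ya: "\<forall>pq \<in> dom (xh |` P U). (xh |` P U) pq = Some (y pq)"
    using assms(5) by (auto simp: Xp_def)
  have pf: "dom xh \<subseteq> P V" "ran xh \<subseteq> {0,1}"
    using assms(4) by (auto simp: maximally_specific_def partial_fun_on_def)
  have PU: "P U \<subseteq> P V" using assms(3) by (auto simp: P_def)
  have PN: "P (V - U) \<subseteq> P V" by (auto simp: P_def)
  have vals: "t pq = 0 \<or> t pq = 1" if "pq \<in> P V" for pq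
  proof -
    obtain p q where pq: "pq = (p,q)" by (cases pq)
    have pqV: "p \<in> V" "q \<in> V" "p \<noteq> q" using that pq by (auto simp: P_def)
    consider "p \<in> U" "q \<in> U" | "p \<in> U" "q \<in> V - U" | "p \<in> V - U" "q \<in> U" | "p \<in> V - U" "q \<in> V - U"
      using pqV by blast
    then show ?thesis
    proof cases
      case 1 then show ?thesis using X_vals[OF yU, of pq] pq pqV t tau_UU[of p U q k V y x] by (auto simp: P_def)
    next
      case 2 then show ?thesis using pq t tau_UN[of p U q V k y x] by (cases k) auto
    next
      case 3 then show ?thesis using pq t tau_NU[of p V U q k y x] by (cases k) auto
    next
      case 4 then show ?thesis using X_vals[OF xV, of pq] pq pqV t tau_NN[of p V U q k y x] by (auto simp: P_def)
    qed
  qed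
  have yv: "val y p r = 1" if "p \<in> U" "q \<in> U" "r \<in> U" "val y p q = 1" "val y q r = 1" for p q r
    using valtrans[OF yU] that by blast
  have xv: "val x p r = 1" if "p \<in> V" "q \<in> V" "r \<in> V" "val x p q = 1" "val x q r = 1" for p q r
    using valtrans[OF xV] that by blast
  have trans: "t (p,r) = 1" if asm: "p \<in> V" "q \<in> V" "r \<in> V" "p \<noteq> q" "q \<noteq> r" "p \<noteq> r"
     "t (p,q) = 1" "t (q,r) = 1" for p q r
  proof -
    note tl = tau_UU[of _ U _ k V y x] tau_NN[of _ V U _ k y x] tau_UN[of _ U _ V k y x] tau_NU[of _ V U _ k y x]
    consider "p \<in> U" "q \<in> U" "r \<in> U" | "p \<in> U" "q \<in> U" "r \<notin> U" | "p \<in> U" "q \<notin> U" "r \<in> U"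
      | "p \<in> U" "q \<notin> U" "r \<notin> U" | "p \<notin> U" "q \<in> U" "r \<in> U" | "p \<notin> U" "q \<in> U" "r \<notin> U"
      | "p \<notin> U" "q \<notin> U" "r \<in> U" | "p \<notin> U" "q \<notin> U" "r \<notin> U" by blast
    then show ?thesis
    proof cases
      case 1
      then have "val y p q = 1" "val y q r = 1" using asm t tl by (auto simp: val_def)
      then have "val y p r = 1" using yv 1 by blast
      then show ?thesis using asm t tl 1 by (auto simp: val_def)
    next
      case 2
      then obtain s where s: "s \<in> U" "val y q s = 1" "val x s r = 1" using asm t tl
        by (cases k) (auto split: if_splits)
      have "val y p q = 1" using asm t tl 2 by (auto simp: val_def)
      then have "val y p s = 1" using yv 2 s by blast
      then show ?thesis using asm t tl 2 s by (cases k) auto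
    next
      case 3 then show ?thesis using asm t tl by (cases k) (auto split: if_splits)
    next
      case 4
      then obtain s where s: "s \<in> U" "val y p s = 1" "val x s q = 1" using asm t tl
        by (cases k) (auto split: if_splits)
      have "val x q r = 1" using asm t tl 4 by (auto simp: val_def)
      then have "val x s r = 1" using xv 4 s that assms(3) by blast
      then show ?thesis using asm t tl 4 s by (cases k) auto
    next
      case 5
      then obtain s where s: "s \<in> U" "val x p s = 1" "val y s q = 1" using asm t tl
        by (cases k) (auto split: if_splits)
      have "val y q r = 1" using asm t tl 5 by (auto simp: val_def)
      then have "val y s r = 1" using yv 5 s by blast
      then show ?thesis using asm t tl 5 s by (cases k) auto
    next
      case 6 then show ?thesis using asm t tl by (cases k) (auto split: if_splits)
    next
      case 7
      then obtain s where s: "s \<in> U" "val x q s = 1" "val y s r = 1" using asm t tl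
        by (cases k) (auto split: if_splits)
      have "val x p q = 1" using asm t tl 7 by (auto simp: val_def)
      then have "val x p s = 1" using xv 7 s that assms(3) by blast
      then show ?thesis using asm t tl 7 s by (cases k) auto
    next
      case 8
      then have "val x p q = 1" "val x q r = 1" using asm t tl by (auto simp: val_def)
      then have "val x p r = 1" using xv that by blast
      then show ?thesis using asm t tl 8 by (auto simp: val_def)
    qed
  qed
  have tX: "t \<in> X V"
  proof -
    have "t (p, q) + t (q, r) - t (p, r) \<le> 1" if "p \<in> V" "q \<in> V" "r \<in> V" "p \<noteq> q" "q \<noteq> r" "p \<noteq> r" for p q r
      using vals[of "(p,q)"] vals[of "(q,r)"] vals[of "(p,r)"] trans[OF that] that by (auto simp: P_def)
    moreover have "t pq = 0" if "pq \<notin> P V" for pq using tau_outside[OF assms(3) that] t by simp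
    ultimately show ?thesis using vals unfolding X_def by blast
  qed
  have agree: "xh pq = Some (t pq)" if pd: "pq \<in> dom xh" for pq
  proof -
    obtain p q where pq: "pq = (p,q)" by (cases pq)
    have pqP: "pq \<in> P V" using pd pf by blast
    have pqV: "p \<in> V" "q \<in> V" "p \<noteq> q" using pqP pq by (auto simp: P_def)
    have xs: "xh pq = Some (x pq)" using xa pd by blast
    have x01: "x pq = 0 \<or> x pq = 1" using X_vals[OF xV pqP] .
    note tl = tau_UU[of p U q k V y x] tau_NN[of p V U q k y x] tau_UN[of p U q V k y x] tau_NU[of p V U q k y x]
    consider "p \<in> U" "q \<in> U" | "p \<in> U" "q \<in> V - U" | "p \<in> V - U" "q \<in> U" | "p \<in> V - U" "q \<in> V - U"
      using pqV by blast
    then show ?thesis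
    proof cases
      case 1
      have "pq \<in> P U" using 1 pq pqV by (auto simp: P_def)
      then have "(xh |` P U) pq = Some (y pq)" using ya pd by auto
      then show ?thesis using 1 pq pqV t tl \<open>pq \<in> P U\<close> by simp
    next
      case 4 then show ?thesis using xs pq pqV t tl by simp
    next
      case 2
      show ?thesis
      proof (cases "x pq = 1")
        case True
        then have "xh pq = Some 1" using xs by simp
        then have "pq \<notin> P10 k V U xh" using assms(6) by (auto simp: preim_def)
        then have "k = In" using 2 pq True xs by (cases k) (auto simp: P10_def delta_def preim_def)
        moreover have "val y p p = 1" "val x p q = 1" using True pq pqV by (auto simp: val_def)
        ultimately show ?thesis using 2 t tl xs True pq by auto
      next
        case False
        then have x0: "x pq = 0" using x01 by simp
        then have h0: "xh pq = Some 0" using xs by simp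
        show ?thesis
        proof (cases k)
          case In
          have "pq \<notin> P01' k V U xh y" using assms(6) h0 2 pq In
            by (auto simp: P01''_def preim_def)
          then have "\<not> (\<exists>r \<in> U. val y p r = 1 \<and> pval xh r q \<noteq> Some 0)"
            using In 2 pq h0 by (auto simp: P01'_def preim_def)
          moreover have "pval xh r q = Some 0 \<Longrightarrow> r \<in> U \<Longrightarrow> val x r q = 0" for r
            using xa 2 by (auto simp: pval_def val_def dom_def) (metis option.inject)
          ultimately have "\<not> (\<exists>r \<in> U. val y p r = 1 \<and> val x r q = 1)" by fastforce
          then show ?thesis using In 2 t tl h0 pq by auto
        qed (use 2 t tl h0 pq in auto)
      qed
    next
      case 3
      show ?thesis
      proof (cases "x pq = 1")
        case True
        then have "xh pq = Some 1" using xs by simp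
        then have "pq \<notin> P10 k V U xh" using assms(6) by (auto simp: preim_def)
        then have "k = Out" using 3 pq True xs by (cases k) (auto simp: P10_def delta_def preim_def)
        moreover have "val y q q = 1" "val x p q = 1" using True pq pqV by (auto simp: val_def)
        ultimately show ?thesis using 3 t tl xs True pq by auto
      next
        case False
        then have x0: "x pq = 0" using x01 by simp
        then have h0: "xh pq = Some 0" using xs by simp
        show ?thesis
        proof (cases k)
          case Out
          have "pq \<notin> P01' k V U xh y" using assms(6) h0 3 pq Out
            by (auto simp: P01''_def preim_def)
          then have "\<not> (\<exists>r \<in> U. pval xh p r \<noteq> Some 0 \<and> val y r q = 1)"
            using Out 3 pq h0 by (auto simp: P01'_def preim_def)
          moreover have "pval xh p r = Some 0 \<Longrightarrow> r \<in> U \<Longrightarrow> val x p r = 0" for r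
            using xa 3 by (auto simp: pval_def val_def dom_def) (metis option.inject)
          ultimately have "\<not> (\<exists>r \<in> U. val x p r = 1 \<and> val y r q = 1)" by fastforce
          then show ?thesis using Out 3 t tl h0 pq by auto
        qed (use 3 t tl h0 pq in auto)
      qed
    qed
  qed
  show "t \<in> Xp V xh" using tX agree by (simp add: Xp_def)
qed

end
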